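(* (1) Let $\mathbf S=(S,\vee,K)$ be a closure semilattice, and for $n\ge1$ and $a,b_1,\dots,b_n\in S$ set $a\sqsubseteq^n b_1,\dots,b_n$ iff $a\le Kb_1\vee\dots\vee Kb_n$. Then $(S,\vee,(\sqsubseteq^n)_{n\ge1})$ is a principal regular multi-argument specialization semilattice. In particular this applies when $\mathbf S$ is a closure space $(\mathcal P(X),\cup,K)$. (2) If $\mathbf T$ is another closure semilattice and $\varphi:\mathbf S\to\mathbf T$ is a homomorphism of closure semilattices (i.e. $\varphi(a\vee b)=\varphi(a)\vee\varphi(b)$ and $\varphi(Ka)=K\varphi(a)$ for all $a,b$), then $\varphi$ is a homomorphism between the associated multi-argument specialization semilattices defined as in (1).
   Context: A closure operation on a poset is extensive ($x\le Kx$), idempotent ($KKx=Kx$) and isotone. A closure semilattice is a join semilattice with a closure operation; a closure space is $(\mathcal P(X),\cup,K)$ with $K$ a closure operation on $\mathcal P(X)$. A multi-argument specialization semilattice is a join semilattice $(M,\vee)$ (order $a\le b$ iff $a\vee b=b$) with, for each $n\ge1$, an $(n+1)$-ary relation $a\sqsubseteq^n b_1,\dots,b_n$ (also written $a\sqsubseteq b_1,\dots,b_n$) such that: (M1) $a\sqsubseteq a$; (M2) $a\sqsubseteq b_1,\dots,b_n$ and $b_1\sqsubseteq c$ imply $a\sqsubseteq c,b_2,\dots,b_n$; (M3) $a\le b$ and $b\sqsubseteq c_1,\dots,c_m$ imply $a\sqsubseteq c_1,\dots,c_m$; (M4) $a\sqsubseteq b_1,\dots,b_n$ implies $a\sqsubseteq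 b_{\sigma1},\dots,b_{\sigma n}$ for every permutation $\sigma$; (M5) $a\sqsubseteq b_1,\dots,b_n,b_n$ implies $a\sqsubseteq b_1,\dots,b_n$; (M6) $a\sqsubseteq b_1,\dots,b_n$ implies $a\sqsubseteq b_1,\dots,b_n,b_{n+1}$; (M7) $a\sqsubseteq b_1,\dots,b_n$ and $a_1\sqsubseteq b_1,\dots,b_n$ imply $a\vee a_1\sqsubseteq b_1,\dots,b_n$. It is principal if for every $x$ there is a $\le$-largest $y$ with $y\sqsubseteq^1 x$; this $y$ is denoted $Kx$. A principal one is regular if $a\sqsubseteq^n b_1,\dots,b_n$ holds iff $a\le Kb_1\vee\dots\vee Kb_n$, for all $n$ and elements. A homomorphism of multi-argument specialization semilattices is a join-preserving map $\varphi$ such that $a\sqsubseteq^n b_1,\dots,b_n$ implies $\varphi(a)\sqsubseteq^n\varphi(b_1),\dots,\varphi(b_n)$ for all $n$. *)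

theory Defs
  imports "HOL-Combinatorics.Permutations"
begin

text \<open>An (n+1)-ary relation a \<sqsubseteq>^n b1,...,bn is rendered
  as a predicate on an element and a NONEMPTY list [b1,...,bn] of length n.\<close>

definition closure_op :: "('a::order \<Rightarrow> 'a) \<Rightarrow> bool" where
  "closure_op K \<longleftrightarrow> (\<forall>x. x \<le> K x) \<and> (\<forall>x. K (K x) = K x) \<and> mono K"

fun list_join :: "'a::semilattice_sup list \<Rightarrow> 'a" where
  "list_join [] = undefined"
| "list_join [x] = x"
| "list_join (x # y # ys) = sup x (list_join (y # ys))"

definition msl :: "('a::semilattice_sup \<Rightarrow> 'a list \<Rightarrow> bool) \<Rightarrow> bool" where
  "msl sq \<longleftrightarrow>
     (\<forall>a. sq a [a]) \<and>
     (\<forall>a b bs c. sq a (b # bs) \<and> sq b [c] \<longrightarrow> sq a (c # bs)) \<and>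
     (\<forall>a b cs. cs \<noteq> [] \<and> a \<le> b \<and> sq b cs \<longrightarrow> sq a cs) \<and>
     (\<forall>a bs \<sigma>. bs \<noteq> [] \<and> sq a bs \<and> \<sigma> permutes {..<length bs} \<longrightarrow>
         sq a (map (\<lambda>i. bs ! \<sigma> i) [0..<length bs])) \<and>
     (\<forall>a bs b. sq a (bs @ [b, b]) \<longrightarrow> sq a (bs @ [b])) \<and>
     (\<forall>a bs b. bs \<noteq> [] \<and> sq a bs \<longrightarrow> sq a (bs @ [b])) \<and>
     (\<forall>a a1 bs. bs \<noteq> [] \<and> sq a bs \<and> sq a1 bs \<longrightarrow> sq (sup a a1) bs)"

definition msl_principal :: "('a::semilattice_sup \<Rightarrow> 'a list \<Rightarrow> bool) \<Rightarrow> bool" where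
  "msl_principal sq \<longleftrightarrow> msl sq \<and> (\<forall>x. \<exists>y. sq y [x] \<and> (\<forall>z. sq z [x] \<longrightarrow> z \<le> y))"

definition msl_K :: "('a::semilattice_sup \<Rightarrow> 'a list \<Rightarrow> bool) \<Rightarrow> 'a \<Rightarrow> 'a" where
  "msl_K sq x = (GREATEST y. sq y [x])"

definition msl_regular :: "('a::semilattice_sup \<Rightarrow> 'a list \<Rightarrow> bool) \<Rightarrow> bool" where
  "msl_regular sq \<longleftrightarrow> msl_principal sq \<and>
     (\<forall>a bs. bs \<noteq> [] \<longrightarrow> (sq a bs \<longleftrightarrow> a \<le> list_join (map (msl_K sq) bs)))"

definition msl_hom :: "('a::semilattice_sup \<Rightarrow> 'b::semilattice_sup) \<Rightarrow>
    ('a \<Rightarrow> 'a list \<Rightarrow> bool) \<Rightarrow> ('b \<Rightarrow> 'b list \<Rightarrow> bool) \<Rightarrow> bool" where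
  "msl_hom \<phi> sqS sqT \<longleftrightarrow> (\<forall>a b. \<phi> (sup a b) = sup (\<phi> a) (\<phi> b)) \<and>
     (\<forall>a bs. bs \<noteq> [] \<and> sqS a bs \<longrightarrow> sqT (\<phi> a) (map \<phi> bs))"

definition ind_sq :: "('a::semilattice_sup \<Rightarrow> 'a) \<Rightarrow> 'a \<Rightarrow> 'a list \<Rightarrow> bool" where
  "ind_sq K a bs \<longleftrightarrow> bs \<noteq> [] \<and> a \<le> list_join (map K bs)"

end

theory Submission
  imports Defs
begin

lemma lj_le: "bs \<noteq> [] \<Longrightarrow> (list_join bs \<le> z) \<longleftrightarrow> (\<forall>b\<in>set bs. b \<le> z)"
  by (induction bs rule: list_join.induct) auto

lemma lj_ge: "b \<in> set bs \<Longrightarrow> b \<le> list_join bs"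
  by (metis empty_iff lj_le order_refl set_empty)

lemma lj_mono: "bs \<noteq> [] \<Longrightarrow> cs \<noteq> [] \<Longrightarrow> (\<forall>b\<in>set bs. \<exists>c\<in>set cs. b \<le> c) \<Longrightarrow> list_join bs \<le> list_join cs"
  by (meson lj_ge lj_le order_trans)

lemma lj_set: "bs \<noteq> [] \<Longrightarrow> cs \<noteq> [] \<Longrightarrow> set bs = set cs \<Longrightarrow> list_join bs = list_join cs"
  by (rule antisym; rule lj_mono) auto

lemma lj_hom: "(\<forall>a b. \<phi> (sup a b) = sup (\<phi> a) (\<phi> b)) \<Longrightarrow> bs \<noteq> [] \<Longrightarrow> \<phi> (list_join bs) = list_join (map \<phi> bs)"
  by (induction bs rule: list_join.induct) auto

lemma K_eq: "closure_op K \<Longrightarrow> msl_K (ind_sq K) x = K x"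
  unfolding msl_K_def ind_sq_def by (rule Greatest_equality) auto

lemma main:
  fixes K :: "'a::semilattice_sup \<Rightarrow> 'a"
  assumes c: "closure_op K"
  shows "msl_regular (ind_sq K)"
proof -
  have ext: "\<And>x. x \<le> K x" and idem: "\<And>x. K (K x) = K x" and mon: "\<And>x y. x \<le> y \<Longrightarrow> K x \<le> K y"
    using c unfolding closure_op_def mono_def by auto
  have M1: "\<forall>a. ind_sq K a [a]" using ext by (simp add: ind_sq_def)
  have M2: "\<forall>a b bs c. ind_sq K a (b # bs) \<and> ind_sq K b [c] \<longrightarrow> ind_sq K a (c # bs)"
  proof (intro allI impI)
    fix a b bs c assume h: "ind_sq K a (b # bs) \<and> ind_sq K b [c]"
    hence "K b \<le> K c" using mon idem by (metis ind_sq_def list.simps(8,9) list_join.simps(2))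
    hence "list_join (map K (b # bs)) \<le> list_join (map K (c # bs))"
      by (intro lj_mono) (auto intro: lj_ge)
    thus "ind_sq K a (c # bs)" using h unfolding ind_sq_def by (auto intro: order_trans)
  qed
  have M3: "\<forall>a b cs. cs \<noteq> [] \<and> a \<le> b \<and> ind_sq K b cs \<longrightarrow> ind_sq K a cs"
    unfolding ind_sq_def by (auto intro: order_trans)
  have M4: "\<forall>a bs \<sigma>. bs \<noteq> [] \<and> ind_sq K a bs \<and> \<sigma> permutes {..<length bs} \<longrightarrow>
         ind_sq K a (map (\<lambda>i. bs ! \<sigma> i) [0..<length bs])"
  proof (intro allI impI)
    fix a bs \<sigma> assume h: "bs \<noteq> [] \<and> ind_sq K a bs \<and> \<sigma> permutes {..<length bs}"
    have "set (map (\<lambda>i. bs ! \<sigma> i) [0..<length bs]) = (nth bs) ` (\<sigma> ` {..<length bs})"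
      by (auto simp: image_image atLeast0LessThan)
    also have "\<dots> = set bs" using h permutes_image[of \<sigma> "{..<length bs}"]
      by (simp add: set_conv_nth, auto)
    finally have s0: "set (map (\<lambda>i. bs ! \<sigma> i) [0..<length bs]) = set bs" .
    have s: "set (map K (map (\<lambda>i. bs ! \<sigma> i) [0..<length bs])) = set (map K bs)"
      by (metis s0 set_map)
    have ne: "map (\<lambda>i. bs ! \<sigma> i) [0..<length bs] \<noteq> []" using h by simp
    show "ind_sq K a (map (\<lambda>i. bs ! \<sigma> i) [0..<length bs])"
      using h ne lj_set[OF _ _ s] unfolding ind_sq_def by simp
  qed
  have M5: "\<forall>a bs b. ind_sq K a (bs @ [b, b]) \<longrightarrow> ind_sq K a (bs @ [b])"
    unfolding ind_sq_def using lj_set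
    by (metis (no_types, lifting) Nil_is_append_conv Nil_is_map_conv append_Cons insert_absorb2 list.distinct(1) list.simps(15) set_append set_map)
  have M6: "\<forall>a bs b. bs \<noteq> [] \<and> ind_sq K a bs \<longrightarrow> ind_sq K a (bs @ [b])"
  proof (intro allI impI)
    fix a bs b assume h: "bs \<noteq> [] \<and> ind_sq K a bs"
    have "list_join (map K bs) \<le> list_join (map K (bs @ [b]))"
      using h by (intro lj_mono) (auto intro: lj_ge)
    thus "ind_sq K a (bs @ [b])" using h unfolding ind_sq_def by (auto intro: order_trans)
  qed
  have M7: "\<forall>a a1 bs. bs \<noteq> [] \<and> ind_sq K a bs \<and> ind_sq K a1 bs \<longrightarrow> ind_sq K (sup a a1) bs"
    unfolding ind_sq_def by auto
  have msl: "msl (ind_sq K)" unfolding msl_def using M1 M2 M3 M4 M5 M6 M7 by blast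
  have pr: "msl_principal (ind_sq K)" unfolding msl_principal_def
    using msl by (auto simp: ind_sq_def)
  have kk: "msl_K (ind_sq K) = K" using K_eq[OF c] by blast
  show ?thesis unfolding msl_regular_def using pr kk by (simp add: ind_sq_def)
qed

theorem proposition3p3:
  fixes K :: "'a::semilattice_sup \<Rightarrow> 'a" and L :: "'b::semilattice_sup \<Rightarrow> 'b"
    and \<phi> :: "'a \<Rightarrow> 'b" and C :: "'x set \<Rightarrow> 'x set"
  shows "(closure_op K \<longrightarrow> msl_regular (ind_sq K))
    \<and> (closure_op C \<longrightarrow> msl_regular (ind_sq C))
    \<and> (closure_op K \<and> closure_op L \<and> (\<forall>a b. \<phi> (sup a b) = sup (\<phi> a) (\<phi> b))
         \<and> (\<forall>a. \<phi> (K a) = L (\<phi> a))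
       \<longrightarrow> msl_hom \<phi> (ind_sq K) (ind_sq L))"
proof (intro conjI impI)
  show "closure_op K \<Longrightarrow> msl_regular (ind_sq K)" by (rule main)
  show "closure_op C \<Longrightarrow> msl_regular (ind_sq C)" by (rule main)
next
  assume h: "closure_op K \<and> closure_op L \<and> (\<forall>a b. \<phi> (sup a b) = sup (\<phi> a) (\<phi> b))
         \<and> (\<forall>a. \<phi> (K a) = L (\<phi> a))"
  have hs: "\<forall>a b. \<phi> (sup a b) = sup (\<phi> a) (\<phi> b)" using h by blast
  have mono: "\<And>x y. x \<le> y \<Longrightarrow> \<phi> x \<le> \<phi> y" using hs by (metis le_iff_sup)
  show "msl_hom \<phi> (ind_sq K) (ind_sq L)" unfolding msl_hom_def
  proof (intro conjI allI impI)
    show "\<And>a b. \<phi> (sup a b) = sup (\<phi> a) (\<phi> b)" using hs by blast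
    fix a bs assume a: "bs \<noteq> [] \<and> ind_sq K a bs"
    have "\<phi> a \<le> \<phi> (list_join (map K bs))" using a mono unfolding ind_sq_def by blast
    also have "\<dots> = list_join (map \<phi> (map K bs))" using a lj_hom[OF hs] by simp
    also have "map \<phi> (map K bs) = map L (map \<phi> bs)" using h by simp
    finally show "ind_sq L (\<phi> a) (map \<phi> bs)" using a unfolding ind_sq_def by simp
  qed
qed

end
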